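(* Let $G$ be a finite supersolvable group and $A$ a conjugacy class of $G$. Then $$\operatorname{dl}(G/\mathbf{C}_G(A))\le 2\,\eta(AA^{-1})-1.$$
   Context: For a nonempty subset $X\subseteq G$ that is $G$-invariant (i.e. $g^{-1}Xg=X$ for all $g\in G$), $\eta(X)$ denotes the number of distinct conjugacy classes of $G$ whose union is $X$. For conjugacy classes $A,B$, $AB=\{ab\mid a\in A,b\in B\}$ and $A^{-1}=\{a^{-1}\mid a\in A\}$, so $AA^{-1}=\{ab^{-1}\mid a,b\in A\}$, which is $G$-invariant. $\mathbf{C}_G(A)=\{g\in G\mid g^{-1}ag=a\text{ for all }a\in A\}$. $\operatorname{dl}$ denotes derived length. *)

theory Defs
  imports "HOL-Algebra.Algebra"
begin

definition cyclic_grp :: "('a, 'b) monoid_scheme \<Rightarrow> bool" where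
  "cyclic_grp H \<longleftrightarrow> (\<exists>a \<in> carrier H. carrier H = generate H {a})"

definition supersolvable :: "('a, 'b) monoid_scheme \<Rightarrow> bool" where
  "supersolvable G \<longleftrightarrow>
     (\<exists>(r::nat) (N::nat \<Rightarrow> 'a set).
        N 0 = {\<one>\<^bsub>G\<^esub>} \<and> N r = carrier G \<and>
        (\<forall>i\<le>r. N i \<lhd> G) \<and>
        (\<forall>i<r. N i \<subseteq> N (Suc i) \<and>
               cyclic_grp ((G\<lparr>carrier := N (Suc i)\<rparr>) Mod (N i))))"

definition conj_class :: "('a, 'b) monoid_scheme \<Rightarrow> 'a \<Rightarrow> 'a set" where
  "conj_class G a = {inv\<^bsub>G\<^esub> g \<otimes>\<^bsub>G\<^esub> a \<otimes>\<^bsub>G\<^esub> g | g. g \<in> carrier G}"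

definition conj_classes :: "('a, 'b) monoid_scheme \<Rightarrow> 'a set set" where
  "conj_classes G = {conj_class G a | a. a \<in> carrier G}"

definition num_classes :: "('a, 'b) monoid_scheme \<Rightarrow> 'a set \<Rightarrow> nat" where
  "num_classes G S = card {C \<in> conj_classes G. C \<subseteq> S}"

definition set_mult_inv :: "('a, 'b) monoid_scheme \<Rightarrow> 'a set \<Rightarrow> 'a set" where
  "set_mult_inv G A = {a \<otimes>\<^bsub>G\<^esub> inv\<^bsub>G\<^esub> b | a b. a \<in> A \<and> b \<in> A}"

definition centralizer_set :: "('a, 'b) monoid_scheme \<Rightarrow> 'a set \<Rightarrow> 'a set" where
  "centralizer_set G A = {g \<in> carrier G. \<forall>a \<in> A. inv\<^bsub>G\<^esub> g \<otimes>\<^bsub>G\<^esub> a \<otimes>\<^bsub>G\<^esub> g = a}"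

definition derived_length :: "('a, 'b) monoid_scheme \<Rightarrow> nat" where
  "derived_length H = (LEAST n. (derived H ^^ n) (carrier H) = {\<one>\<^bsub>H\<^esub>})"

end

theory Submission
  imports Defs
begin

definition cj :: "('a, 'b) monoid_scheme \<Rightarrow> 'a \<Rightarrow> 'a \<Rightarrow> 'a" where
  "cj G g x = inv\<^bsub>G\<^esub> g \<otimes>\<^bsub>G\<^esub> x \<otimes>\<^bsub>G\<^esub> g"

context group begin

lemma canc1[simp]: "g \<in> carrier G \<Longrightarrow> x \<in> carrier G \<Longrightarrow> g \<otimes> (inv g \<otimes> x) = x"
  by (simp add: m_assoc[symmetric])
lemma canc2[simp]: "g \<in> carrier G \<Longrightarrow> x \<in> carrier G \<Longrightarrow> inv g \<otimes> (g \<otimes> x) = x"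
  by (simp add: m_assoc[symmetric])

lemma cj_closed[intro, simp]: "g \<in> carrier G \<Longrightarrow> x \<in> carrier G \<Longrightarrow> cj G g x \<in> carrier G"
  by (simp add: cj_def)

lemma cj_one[simp]: "x \<in> carrier G \<Longrightarrow> cj G \<one> x = x"
  by (simp add: cj_def)

lemma cj_mult: "g \<in> carrier G \<Longrightarrow> h \<in> carrier G \<Longrightarrow> x \<in> carrier G \<Longrightarrow>
   cj G (g \<otimes> h) x = cj G h (cj G g x)"
  by (simp add: cj_def inv_mult_group m_assoc)

lemma cj_inv_cancel: "g \<in> carrier G \<Longrightarrow> x \<in> carrier G \<Longrightarrow> cj G (inv g) (cj G g x) = x"
  by (simp add: cj_def m_assoc)

lemma cj_m: "g \<in> carrier G \<Longrightarrow> x \<in> carrier G \<Longrightarrow> y \<in> carrier G \<Longrightarrow>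
   cj G g (x \<otimes> y) = cj G g x \<otimes> cj G g y"
  by (simp add: cj_def m_assoc)

lemma cj_hom: "g \<in> carrier G \<Longrightarrow> cj G g \<in> hom G G"
  by (rule homI) (auto simp: cj_m)

lemma cj_pow: "g \<in> carrier G \<Longrightarrow> x \<in> carrier G \<Longrightarrow> cj G g (x [^] (k::int)) = (cj G g x) [^] k"
  using hom_int_pow[OF cj_hom] is_group by blast

lemma cj_fix_iff: assumes g: "g \<in> carrier G" and x: "x \<in> carrier G" shows "cj G g x = x \<longleftrightarrow> g \<otimes> x = x \<otimes> g"
proof
  assume e: "cj G g x = x"
  have "g \<otimes> cj G g x = g \<otimes> x" using e by simp
  moreover have "g \<otimes> cj G g x = x \<otimes> g" using g x by (simp add: cj_def m_assoc)
  ultimately show "g \<otimes> x = x \<otimes> g" by simp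
next
  assume e: "g \<otimes> x = x \<otimes> g"
  have "cj G g x = inv g \<otimes> (x \<otimes> g)" using g x by (simp add: cj_def m_assoc)
  also have "\<dots> = inv g \<otimes> (g \<otimes> x)" using e by simp
  also have "\<dots> = x" using g x by simp
  finally show "cj G g x = x" .
qed

lemma cj_eq_mult: "g \<in> carrier G \<Longrightarrow> x \<in> carrier G \<Longrightarrow> t \<in> carrier G \<Longrightarrow>
   cj G g x = t \<otimes> x \<longleftrightarrow> cj G g x \<otimes> inv x = t"
  by (metis cj_closed inv_solve_right)

lemma GL1:
  assumes z: "z \<in> carrier G" and u: "u \<in> carrier G" and v: "v \<in> carrier G"
    and a: "cj G u z = z [^] (a::int)" and b: "cj G v z = z [^] (b::int)"
  shows "cj G (u \<otimes> v \<otimes> inv u \<otimes> inv v) z = z"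
proof -
  have 1: "cj G (u \<otimes> v) z = z [^] (b * a)"
    using z u v a b by (simp add: cj_mult cj_pow int_pow_pow)
  have 2: "cj G (v \<otimes> u) z = z [^] (a * b)"
    using z u v a b by (simp add: cj_mult cj_pow int_pow_pow)
  have e: "u \<otimes> v \<otimes> inv u \<otimes> inv v = (u \<otimes> v) \<otimes> inv (v \<otimes> u)"
    using u v by (simp add: inv_mult_group m_assoc)
  have "cj G ((u \<otimes> v) \<otimes> inv (v \<otimes> u)) z = cj G (inv (v \<otimes> u)) (cj G (v \<otimes> u) z)"
    using 1 2 u v z by (simp add: cj_mult mult.commute)
  also have "\<dots> = z" using u v z by (simp add: cj_inv_cancel)
  finally show ?thesis using e by simp
qed

lemma GL2:
  assumes z: "z \<in> carrier G" and g: "g \<in> carrier G" and h: "h \<in> carrier G" and x: "x \<in> carrier G"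
    and gz: "cj G g z = z" and hz: "cj G h z = z"
    and gx: "cj G g x = z [^] (i::int) \<otimes> x" and hx: "cj G h x = z [^] (j::int) \<otimes> x"
  shows "cj G (g \<otimes> h \<otimes> inv g \<otimes> inv h) x = x"
proof -
  have 1: "cj G (g \<otimes> h) x = z [^] (i + j) \<otimes> x"
    using z g h x gz hz gx hx by (simp add: cj_mult cj_m cj_pow int_pow_mult m_assoc)
  have 2: "cj G (h \<otimes> g) x = z [^] (j + i) \<otimes> x"
    using z g h x gz hz gx hx by (simp add: cj_mult cj_m cj_pow int_pow_mult m_assoc)
  have e: "g \<otimes> h \<otimes> inv g \<otimes> inv h = (g \<otimes> h) \<otimes> inv (h \<otimes> g)"
    using g h by (simp add: inv_mult_group m_assoc)
  have "cj G ((g \<otimes> h) \<otimes> inv (h \<otimes> g)) x = cj G (inv (h \<otimes> g)) (cj G (h \<otimes> g) x)"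
    using 1 2 g h x by (simp add: cj_mult add.commute)
  also have "\<dots> = x" using g h x by (simp add: cj_inv_cancel)
  finally show ?thesis using e by simp
qed

lemma rcos_eq_iff:
  assumes "M \<lhd> G" "x \<in> carrier G" "y \<in> carrier G"
  shows "(M #> x = M #> y) \<longleftrightarrow> x \<otimes> inv y \<in> M"
proof -
  have sM: "subgroup M G" using assms(1) normal_imp_subgroup by blast
  show ?thesis
  proof
    assume "M #> x = M #> y"
    then have "x \<in> M #> y" using rcos_self[OF assms(2) sM] by simp
    then show "x \<otimes> inv y \<in> M" using subgroup.rcos_module_imp[OF sM is_group assms(3)] by blast
  next
    assume "x \<otimes> inv y \<in> M"
    then have "x \<in> M #> y" using subgroup.rcos_module_rev[OF sM is_group assms(3) assms(2)] by blast
    then show "M #> x = M #> y" using repr_independence[OF _ assms(3) sM] by simp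
  qed
qed

end

lemma hom_cj:
  assumes "group G" "group H" "h \<in> hom G H" "g \<in> carrier G" "x \<in> carrier G"
  shows "h (cj G g x) = cj H (h g) (h x)"
proof -
  interpret gh: group_hom G H h using assms by (simp add: group_hom_def group_hom_axioms_def)
  show ?thesis using assms by (simp add: cj_def gh.hom_inv)
qed



context group begin

lemma Q_group: "M \<lhd> G \<Longrightarrow> group (G Mod M)"
  using normal.factorgroup_is_group by blast

lemma Q_hom: "M \<lhd> G \<Longrightarrow> (\<lambda>a. M #> a) \<in> hom G (G Mod M)"
  using normal.r_coset_hom_Mod by blast

lemma PI:
  assumes M: "M \<lhd> G" and g: "g \<in> carrier G" and x: "x \<in> carrier G" and y: "y \<in> carrier G"
  shows "cj G g x \<otimes> inv y \<in> M \<longleftrightarrow> cj (G Mod M) (M #> g) (M #> x) = M #> y"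
  using rcos_eq_iff[OF M cj_closed[OF g x] y] hom_cj[OF is_group Q_group[OF M] Q_hom[OF M] g x]
  by simp

lemma pi_mult: "M \<lhd> G \<Longrightarrow> g \<in> carrier G \<Longrightarrow> h \<in> carrier G \<Longrightarrow>
   M #> (g \<otimes> h) = (M #> g) \<otimes>\<^bsub>G Mod M\<^esub> (M #> h)"
  using Q_hom[of M] by (simp add: hom_mult)

lemma pi_inv: "M \<lhd> G \<Longrightarrow> g \<in> carrier G \<Longrightarrow>
   M #> (inv g) = inv\<^bsub>G Mod M\<^esub> (M #> g)"
  using Q_hom[of M] Q_group[of M]
  by (simp add: group_hom.hom_inv group_hom_axioms_def group_hom_def is_group)

lemma pi_carrier: "M \<lhd> G \<Longrightarrow> g \<in> carrier G \<Longrightarrow> M #> g \<in> carrier (G Mod M)"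
  using Q_hom[of M] by (simp add: hom_in_carrier)

definition Stab :: "'a set \<Rightarrow> 'a set \<Rightarrow> 'a set" where
  "Stab M S = {g \<in> carrier G. \<forall>x\<in>S. cj G g x \<otimes> inv x \<in> M}"

lemma Stab_subgroup:
  assumes M: "M \<lhd> G" and S: "S \<subseteq> carrier G"
  shows "subgroup (Stab M S) G"
proof (rule subgroupI)
  interpret Q: group "G Mod M" using Q_group[OF M] .
  show "Stab M S \<subseteq> carrier G" unfolding Stab_def by auto
  show "Stab M S \<noteq> {}"
  proof -
    have "\<one> \<in> Stab M S" unfolding Stab_def using S M
      by (auto simp: normal_imp_subgroup subgroup.one_closed subset_iff)
    then show ?thesis by blast
  qed
  fix g h assume g: "g \<in> Stab M S" and h: "h \<in> Stab M S"
  have gc: "g \<in> carrier G" and hc: "h \<in> carrier G" using g h unfolding Stab_def by auto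
  have gx: "cj (G Mod M) (M #> g) (M #> x) = M #> x" if "x \<in> S" for x
    using g that S PI[OF M gc, of x x] unfolding Stab_def by auto
  have hx: "cj (G Mod M) (M #> h) (M #> x) = M #> x" if "x \<in> S" for x
    using h that S PI[OF M hc, of x x] unfolding Stab_def by auto
  show "inv g \<in> Stab M S" unfolding Stab_def
  proof (intro CollectI conjI ballI)
    show "inv g \<in> carrier G" using gc by simp
    fix x assume x: "x \<in> S"
    have xc: "x \<in> carrier G" using x S by auto
    have "cj (G Mod M) (M #> inv g) (M #> x) = cj (G Mod M) (inv\<^bsub>G Mod M\<^esub> (M #> g)) (cj (G Mod M) (M #> g) (M #> x))"
      using gx[OF x] pi_inv[OF M gc] by simp
    also have "\<dots> = M #> x" using Q.cj_inv_cancel pi_carrier[OF M] gc xc by simp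
    finally show "cj G (inv g) x \<otimes> inv x \<in> M" using PI[OF M _ xc xc, of "inv g"] gc by simp
  qed
  show "g \<otimes> h \<in> Stab M S" unfolding Stab_def
  proof (intro CollectI conjI ballI)
    show "g \<otimes> h \<in> carrier G" using gc hc by simp
    fix x assume x: "x \<in> S"
    have xc: "x \<in> carrier G" using x S by auto
    have "cj (G Mod M) (M #> (g \<otimes> h)) (M #> x) = cj (G Mod M) (M #> h) (cj (G Mod M) (M #> g) (M #> x))"
      using pi_mult[OF M gc hc] Q.cj_mult pi_carrier[OF M] gc hc xc by simp
    also have "\<dots> = M #> x" using gx[OF x] hx[OF x] by simp
    finally show "cj G (g \<otimes> h) x \<otimes> inv x \<in> M" using PI[OF M _ xc xc, of "g \<otimes> h"] gc hc by simp
  qed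
qed

end

locale cls = group G for G (structure) +
  fixes A a0
  assumes fin: "finite (carrier G)" and a0: "a0 \<in> carrier G" and A_def: "A = conj_class G a0"
begin

definition XX where "XX = set_mult_inv G A"
definition D where "D M = Stab M A"
definition R where "R M = {(x,y) \<in> XX \<times> XX. \<exists>g\<in>carrier G. cj G g x \<otimes> inv y \<in> M}"
definition eta where "eta M = card (XX // R M)"

lemma A_eq: "A = {cj G g a0 | g. g \<in> carrier G}"
  unfolding A_def conj_class_def cj_def by simp

lemma A_carrier: "A \<subseteq> carrier G" using A_eq a0 by auto

lemma a0_A: "a0 \<in> A"
proof -
  have "a0 = cj G \<one> a0" using a0 by simp
  then show ?thesis using A_eq one_closed by blast
qed

lemma cj_A: "g \<in> carrier G \<Longrightarrow> x \<in> A \<Longrightarrow> cj G g x \<in> A"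
proof -
  assume g: "g \<in> carrier G" and x: "x \<in> A"
  then obtain h where h: "h \<in> carrier G" "x = cj G h a0" using A_eq by auto
  then have "cj G g x = cj G (h \<otimes> g) a0" using cj_mult[OF h(1) g a0] by simp
  then show ?thesis using A_eq h g by auto
qed

lemma XX_carrier: "XX \<subseteq> carrier G"
  unfolding XX_def set_mult_inv_def using A_carrier by auto

lemma XX_fin: "finite XX" using XX_carrier fin finite_subset by blast

lemma one_XX: "\<one> \<in> XX"
proof -
  have "a0 \<otimes> inv a0 = \<one>" using a0 by simp
  then show ?thesis unfolding XX_def set_mult_inv_def using a0_A by force
qed

lemma cjX: "g \<in> carrier G \<Longrightarrow> x \<in> A \<Longrightarrow> cj G g x \<otimes> inv x \<in> XX"
  unfolding XX_def set_mult_inv_def using cj_A by blast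

lemma D_subgroup: assumes M: "M \<lhd> G" shows "subgroup (D M) G"
  unfolding D_def by (rule Stab_subgroup[OF M A_carrier])

lemma R_equiv:
  assumes M: "M \<lhd> G" shows "equiv XX (R M)"
proof (rule equivI)
  interpret Q: group "G Mod M" using Q_group[OF M] .
  show "R M \<subseteq> XX \<times> XX" unfolding R_def by auto
  show "refl_on XX (R M)"
  proof (rule refl_onI)
    fix x assume x: "x \<in> XX"
    then have xc: "x \<in> carrier G" using XX_carrier by auto
    have "cj G \<one> x \<otimes> inv x \<in> M" using xc M by (simp add: normal_imp_subgroup subgroup.one_closed)
    then show "(x, x) \<in> R M" unfolding R_def using x by blast
  qed
  show "sym (R M)"
  proof (rule symI)
    fix x y assume "(x, y) \<in> R M"
    then obtain g where xy: "x \<in> XX" "y \<in> XX" and g: "g \<in> carrier G" and m: "cj G g x \<otimes> inv y \<in> M"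
      unfolding R_def by auto
    have xc: "x \<in> carrier G" and yc: "y \<in> carrier G" using xy XX_carrier by auto
    have e: "cj (G Mod M) (M #> g) (M #> x) = M #> y" using PI[OF M g xc yc] m by simp
    have "cj (G Mod M) (M #> inv g) (M #> y) = M #> x"
      using e[symmetric] pi_inv[OF M g] Q.cj_inv_cancel pi_carrier[OF M] g xc by simp
    then have "cj G (inv g) y \<otimes> inv x \<in> M" using PI[OF M _ yc xc, of "inv g"] g by simp
    then show "(y, x) \<in> R M" unfolding R_def using xy g by auto
  qed
  show "trans (R M)"
  proof (rule transI)
    fix x y z assume "(x, y) \<in> R M" "(y, z) \<in> R M"
    then obtain g h where xy: "x \<in> XX" "y \<in> XX" "z \<in> XX" and g: "g \<in> carrier G" and h: "h \<in> carrier G"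
      and m: "cj G g x \<otimes> inv y \<in> M" and m2: "cj G h y \<otimes> inv z \<in> M"
      unfolding R_def by auto
    have xc: "x \<in> carrier G" and yc: "y \<in> carrier G" and zc: "z \<in> carrier G" using xy XX_carrier by auto
    have e: "cj (G Mod M) (M #> g) (M #> x) = M #> y" using PI[OF M g xc yc] m by simp
    have e2: "cj (G Mod M) (M #> h) (M #> y) = M #> z" using PI[OF M h yc zc] m2 by simp
    have "cj (G Mod M) (M #> (g \<otimes> h)) (M #> x) = M #> z"
      using e e2 pi_mult[OF M g h] Q.cj_mult pi_carrier[OF M] g h xc by simp
    then have "cj G (g \<otimes> h) x \<otimes> inv z \<in> M" using PI[OF M _ xc zc, of "g \<otimes> h"] g h by simp
    then show "(x, z) \<in> R M" unfolding R_def using xy g h by auto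
  qed
qed

lemma R_mono: "M \<subseteq> N \<Longrightarrow> R M \<subseteq> R N"
  unfolding R_def by blast

lemma quot_map:
  assumes M: "M \<lhd> G" and N: "N \<lhd> G" and MN: "M \<subseteq> N" and x: "x \<in> XX"
  shows "R N `` (R M `` {x}) = R N `` {x}"
proof -
  have eM: "equiv XX (R M)" and eN: "equiv XX (R N)" using R_equiv M N by auto
  show ?thesis
  proof
    show "R N `` {x} \<subseteq> R N `` (R M `` {x})"
      using eM x by (auto dest: equiv_class_self)
    show "R N `` (R M `` {x}) \<subseteq> R N `` {x}"
    proof
      fix z assume "z \<in> R N `` (R M `` {x})"
      then obtain y where "(x,y) \<in> R M" "(y,z) \<in> R N" by auto
      then have "(x,y) \<in> R N" "(y,z) \<in> R N" using R_mono[OF MN] by auto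
      then show "z \<in> R N `` {x}" using eN unfolding equiv_def trans_def by blast
    qed
  qed
qed

lemma quot_image:
  assumes M: "M \<lhd> G" and N: "N \<lhd> G" and MN: "M \<subseteq> N"
  shows "(\<lambda>S. R N `` S) ` (XX // R M) = XX // R N"
  unfolding quotient_def using quot_map[OF M N MN] by auto

lemma eta_le:
  assumes M: "M \<lhd> G" and N: "N \<lhd> G" and MN: "M \<subseteq> N"
  shows "eta N \<le> eta M"
  unfolding eta_def using quot_image[OF M N MN] XX_fin
  by (metis card_image_le finite_quotient R_equiv[OF M] equiv_type)

lemma eta_lt:
  assumes M: "M \<lhd> G" and N: "N \<lhd> G" and MN: "M \<subseteq> N"
    and n: "n \<in> XX" "n \<in> N" "n \<notin> M"
  shows "eta N < eta M"
proof -
  have eM: "equiv XX (R M)" and eN: "equiv XX (R N)" using R_equiv M N by auto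
  have nc: "n \<in> carrier G" using n XX_carrier by auto
  have finq: "finite (XX // R M)" using XX_fin eM by (metis finite_quotient equiv_type)
  have c1: "R M `` {n} \<in> XX // R M" "R M `` {\<one>} \<in> XX // R M" using n one_XX by (auto intro: quotientI)
  have nR: "(n, \<one>) \<notin> R M"
  proof
    assume "(n, \<one>) \<in> R M"
    then obtain g where g: "g \<in> carrier G" and m: "cj G g n \<otimes> inv \<one> \<in> M" unfolding R_def by auto
    have m': "inv g \<otimes> n \<otimes> g \<in> M" using m g nc by (simp add: cj_def)
    have "g \<otimes> (inv g \<otimes> n \<otimes> g) \<otimes> inv g \<in> M"
      using normal.inv_op_closed2[OF M g m'] .
    moreover have "g \<otimes> (inv g \<otimes> n \<otimes> g) \<otimes> inv g = n" using g nc by (simp add: m_assoc)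
    ultimately show False using n by simp
  qed
  have ne: "R M `` {n} \<noteq> R M `` {\<one>}"
  proof
    assume "R M `` {n} = R M `` {\<one>}"
    moreover have "\<one> \<in> R M `` {\<one>}" using eM one_XX by (auto dest: equiv_class_self)
    ultimately show False using nR by auto
  qed
  have rn: "(n, \<one>) \<in> R N"
  proof -
    have "cj G \<one> n \<otimes> inv \<one> \<in> N" using nc n by simp
    then show ?thesis unfolding R_def using n one_XX by blast
  qed
  have same: "R N `` (R M `` {n}) = R N `` (R M `` {\<one>})"
    using quot_map[OF M N MN] n one_XX equiv_class_eq[OF eN rn] by simp
  have "\<not> inj_on (\<lambda>S. R N `` S) (XX // R M)"
    using c1 ne same unfolding inj_on_def by blast
  then have "card ((\<lambda>S. R N `` S) ` (XX // R M)) \<noteq> card (XX // R M)"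
    using finq eq_card_imp_inj_on by blast
  then have "card (XX // R N) < card (XX // R M)"
    using quot_image[OF M N MN] card_image_le[OF finq, of "\<lambda>S. R N `` S"] by simp
  then show ?thesis unfolding eta_def .
qed

lemma eta_pos: "M \<lhd> G \<Longrightarrow> 1 \<le> eta M"
proof -
  assume M: "M \<lhd> G"
  have eM: "equiv XX (R M)" using R_equiv M by auto
  have finq: "finite (XX // R M)" using XX_fin eM by (metis finite_quotient equiv_type)
  have "R M `` {\<one>} \<in> XX // R M" using one_XX by (auto intro: quotientI)
  then have "XX // R M \<noteq> {}" by auto
  then show ?thesis unfolding eta_def using finq by (simp add: Suc_le_eq card_gt_0_iff)
qed

end


context cls begin

lemma pi_comm:
  assumes M: "M \<lhd> G" and u: "u \<in> carrier G" and v: "v \<in> carrier G"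
  shows "M #> (u \<otimes> v \<otimes> inv u \<otimes> inv v) =
    (M #> u) \<otimes>\<^bsub>G Mod M\<^esub> (M #> v) \<otimes>\<^bsub>G Mod M\<^esub> inv\<^bsub>G Mod M\<^esub> (M #> u) \<otimes>\<^bsub>G Mod M\<^esub> inv\<^bsub>G Mod M\<^esub> (M #> v)"
  using u v by (simp add: pi_mult[OF M] pi_inv[OF M])

lemma MB:
  assumes M: "M \<lhd> G" and N: "N \<lhd> G" and MN: "M \<subseteq> N" and z: "z \<in> N"
    and cyc: "\<forall>n\<in>N. \<exists>k::int. n \<otimes> inv (z [^] k) \<in> M"
  shows "derived G (derived G (D N)) \<subseteq> D M"
proof -
  interpret Q: group "G Mod M" using Q_group[OF M] .
  have sN: "subgroup N G" using N normal_imp_subgroup by blast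
  have zc: "z \<in> carrier G" using subgroup.mem_carrier[OF sN z] .
  define \<zeta> where "\<zeta> = M #> z"
  have \<zeta>c: "\<zeta> \<in> carrier (G Mod M)" unfolding \<zeta>_def using pi_carrier[OF M zc] .
  have piN: "\<exists>k::int. M #> n = \<zeta> [^]\<^bsub>G Mod M\<^esub> k" if n: "n \<in> N" for n
  proof -
    obtain k :: int where k: "n \<otimes> inv (z [^] k) \<in> M" using cyc n by blast
    have nc: "n \<in> carrier G" using subgroup.mem_carrier[OF sN n] .
    have "M #> n = M #> (z [^] k)" using rcos_eq_iff[OF M nc int_pow_closed[OF zc]] k by blast
    also have "\<dots> = \<zeta> [^]\<^bsub>G Mod M\<^esub> k" unfolding \<zeta>_def
      by (rule normal.FactGroup_int_pow[OF M zc, symmetric])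
    finally show ?thesis by blast
  qed
  define T where "T = Stab M {z}"
  have sT: "subgroup T G" unfolding T_def using Stab_subgroup[OF M, of "{z}"] zc by blast
  have sDN: "subgroup (D N) G" using D_subgroup[OF N] .
  have sDM: "subgroup (D M) G" using D_subgroup[OF M] .
  have step1: "derived_set G (D N) \<subseteq> T"
  proof
    fix c assume "c \<in> derived_set G (D N)"
    then obtain u v where uv: "u \<in> D N" "v \<in> D N" and c: "c = u \<otimes> v \<otimes> inv u \<otimes> inv v" by blast
    have u: "u \<in> carrier G" and v: "v \<in> carrier G" using subgroup.mem_carrier[OF sDN uv(1)] subgroup.mem_carrier[OF sDN uv(2)] by auto
    have cjN: "cj (G Mod M) (M #> w) \<zeta> \<in> {\<zeta> [^]\<^bsub>G Mod M\<^esub> (k::int) | k. True}" if w: "w \<in> carrier G" for w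
    proof -
      have "cj G w z \<in> N" unfolding cj_def using normal.inv_op_closed1[OF N w z] .
      then obtain k :: int where "M #> cj G w z = \<zeta> [^]\<^bsub>G Mod M\<^esub> k" using piN by blast
      moreover have "M #> cj G w z = cj (G Mod M) (M #> w) \<zeta>"
        unfolding \<zeta>_def using hom_cj[OF is_group Q_group[OF M] Q_hom[OF M] w zc] .
      ultimately show ?thesis by auto
    qed
    obtain a :: int where a: "cj (G Mod M) (M #> u) \<zeta> = \<zeta> [^]\<^bsub>G Mod M\<^esub> a" using cjN[OF u] by blast
    obtain b :: int where b: "cj (G Mod M) (M #> v) \<zeta> = \<zeta> [^]\<^bsub>G Mod M\<^esub> b" using cjN[OF v] by blast
    have "cj (G Mod M) (M #> c) \<zeta> = \<zeta>"
      unfolding c pi_comm[OF M u v]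
      using Q.GL1[OF \<zeta>c pi_carrier[OF M u] pi_carrier[OF M v] a b] .
    then have "cj G c z \<otimes> inv z \<in> M" using PI[OF M _ zc zc, of c] c u v unfolding \<zeta>_def by simp
    then show "c \<in> T" unfolding T_def Stab_def using c u v by simp
  qed
  have d1: "derived G (D N) \<subseteq> T \<inter> D N"
    using generate_subgroup_incl[OF step1 sT] derived_incl[OF subset_refl sDN] unfolding derived_def by blast
  have sTD: "subgroup (T \<inter> D N) G" using subgroups_Inter_pair[OF sT sDN] .
  have step2: "derived_set G (T \<inter> D N) \<subseteq> D M"
  proof
    fix c assume "c \<in> derived_set G (T \<inter> D N)"
    then obtain g h where gh: "g \<in> T" "g \<in> D N" "h \<in> T" "h \<in> D N" and c: "c = g \<otimes> h \<otimes> inv g \<otimes> inv h" by blast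
    have g: "g \<in> carrier G" and h: "h \<in> carrier G" using subgroup.mem_carrier[OF sDN gh(2)] subgroup.mem_carrier[OF sDN gh(4)] by auto
    have fixz: "cj (G Mod M) (M #> w) \<zeta> = \<zeta>" if "w \<in> T" for w
    proof -
      have w: "w \<in> carrier G" "cj G w z \<otimes> inv z \<in> M" using that unfolding T_def Stab_def by auto
      then show ?thesis using PI[OF M w(1) zc zc] unfolding \<zeta>_def by simp
    qed
    have tr: "\<exists>i::int. cj (G Mod M) (M #> w) (M #> x) = \<zeta> [^]\<^bsub>G Mod M\<^esub> i \<otimes>\<^bsub>G Mod M\<^esub> (M #> x)"
      if "w \<in> D N" "x \<in> A" for w x
    proof -
      have w: "w \<in> carrier G" "cj G w x \<otimes> inv x \<in> N" using that unfolding D_def Stab_def by auto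
      have xc: "x \<in> carrier G" using that A_carrier by auto
      obtain i :: int where i: "M #> (cj G w x \<otimes> inv x) = \<zeta> [^]\<^bsub>G Mod M\<^esub> i" using piN[OF w(2)] by blast
      have "M #> (cj G w x \<otimes> inv x) = cj (G Mod M) (M #> w) (M #> x) \<otimes>\<^bsub>G Mod M\<^esub> inv\<^bsub>G Mod M\<^esub> (M #> x)"
        using pi_mult[OF M] pi_inv[OF M] hom_cj[OF is_group Q_group[OF M] Q_hom[OF M] w(1) xc] w(1) xc by simp
      then have e1: "cj (G Mod M) (M #> w) (M #> x) \<otimes>\<^bsub>G Mod M\<^esub> inv\<^bsub>G Mod M\<^esub> (M #> x) = \<zeta> [^]\<^bsub>G Mod M\<^esub> i"
        using i by simp
      have "cj (G Mod M) (M #> w) (M #> x) = \<zeta> [^]\<^bsub>G Mod M\<^esub> i \<otimes>\<^bsub>G Mod M\<^esub> (M #> x)"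
        using Q.cj_eq_mult[OF pi_carrier[OF M w(1)] pi_carrier[OF M xc] Q.int_pow_closed[OF \<zeta>c, of i]] e1 by blast
      then show ?thesis by blast
    qed
    show "c \<in> D M" unfolding D_def Stab_def
    proof (intro CollectI conjI ballI)
      show "c \<in> carrier G" using c g h by simp
      fix x assume x: "x \<in> A"
      have xc: "x \<in> carrier G" using x A_carrier by auto
      obtain i :: int where i: "cj (G Mod M) (M #> g) (M #> x) = \<zeta> [^]\<^bsub>G Mod M\<^esub> i \<otimes>\<^bsub>G Mod M\<^esub> (M #> x)"
        using tr[OF gh(2) x] by blast
      obtain j :: int where j: "cj (G Mod M) (M #> h) (M #> x) = \<zeta> [^]\<^bsub>G Mod M\<^esub> j \<otimes>\<^bsub>G Mod M\<^esub> (M #> x)"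
        using tr[OF gh(4) x] by blast
      have "cj (G Mod M) (M #> c) (M #> x) = M #> x"
        unfolding c pi_comm[OF M g h]
        using Q.GL2[OF \<zeta>c pi_carrier[OF M g] pi_carrier[OF M h] pi_carrier[OF M xc]
            fixz[OF gh(1)] fixz[OF gh(3)] i j] .
      then show "cj G c x \<otimes> inv x \<in> M" using PI[OF M _ xc xc, of c] c g h by simp
    qed
  qed
  have "derived G (derived G (D N)) \<subseteq> derived G (T \<inter> D N)" using mono_derived[OF d1] .
  also have "\<dots> \<subseteq> D M" using generate_subgroup_incl[OF step2 sDM] unfolding derived_def .
  finally show ?thesis .
qed

end


lemma r_coset_restrict: "r_coset (G\<lparr>carrier := S\<rparr>) = r_coset G"
  by (rule ext)+ (simp add: r_coset_def)

context group begin

lemma SS: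
  assumes ss: "supersolvable G" and M: "M \<lhd> G" and Mne: "M \<noteq> carrier G"
  shows "\<exists>N z. N \<lhd> G \<and> M \<subseteq> N \<and> M \<noteq> N \<and> z \<in> N \<and> (\<forall>n\<in>N. \<exists>k::int. n \<otimes> inv (z [^] k) \<in> M)"
proof -
  obtain r :: nat and Nc :: "nat \<Rightarrow> 'a set" where
    N0: "Nc 0 = {\<one>}" and Nr: "Nc r = carrier G" and nor: "\<forall>i\<le>r. Nc i \<lhd> G"
    and ch: "\<forall>i<r. Nc i \<subseteq> Nc (Suc i) \<and> cyclic_grp ((G\<lparr>carrier := Nc (Suc i)\<rparr>) Mod (Nc i))"
    using ss unfolding supersolvable_def by blast
  have sM: "subgroup M G" using M normal_imp_subgroup by blast
  have MsubG: "M \<subseteq> carrier G" using subgroup.subset[OF sM] .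
  have Pr: "\<not> Nc r \<subseteq> M" using Nr Mne MsubG by blast
  define i where "i = (LEAST i. \<not> Nc i \<subseteq> M)"
  have Pi: "\<not> Nc i \<subseteq> M" unfolding i_def by (rule LeastI[of _ r], rule Pr)
  have ir: "i \<le> r" unfolding i_def by (rule Least_le, rule Pr)
  have i0: "i \<noteq> 0" using Pi N0 subgroup.one_closed[OF sM] by auto
  then obtain j where ij: "i = Suc j" using not0_implies_Suc by blast
  have jr: "j < r" using ij ir by simp
  have NjM: "Nc j \<subseteq> M" using not_less_Least[of j "\<lambda>i. \<not> Nc i \<subseteq> M"] ij unfolding i_def by simp
  have ni: "Nc i \<lhd> G" and nj: "Nc j \<lhd> G" using nor ir jr by auto
  have sNi: "subgroup (Nc i) G" using ni normal_imp_subgroup by blast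
  have sNj: "subgroup (Nc j) G" using nj normal_imp_subgroup by blast
  have jsi: "Nc j \<subseteq> Nc i" using ch jr ij by auto
  have cyc: "cyclic_grp ((G\<lparr>carrier := Nc i\<rparr>) Mod (Nc j))" using ch jr ij by auto
  define H where "H = G\<lparr>carrier := Nc i\<rparr>"
  have gH: "group H" unfolding H_def using subgroup_imp_group[OF sNi] .
  have njH: "Nc j \<lhd> H" unfolding H_def using normal_restrict_supergroup[OF sNi nj jsi] .
  interpret H: group H using gH .
  interpret Q': group "H Mod Nc j" using normal.factorgroup_is_group[OF njH] .
  obtain a where a: "a \<in> carrier (H Mod Nc j)" and ga: "carrier (H Mod Nc j) = generate (H Mod Nc j) {a}"
    using cyc unfolding cyclic_grp_def H_def by blast
  obtain c where c: "c \<in> Nc i" and ac: "a = Nc j #> c"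
    using a unfolding carrier_FactGroup H_def r_coset_restrict by auto
  have cc: "c \<in> carrier G" using subgroup.mem_carrier[OF sNi c] .
  have cycNi: "\<exists>k::int. n \<otimes> inv (c [^] k) \<in> M" if n: "n \<in> Nc i" for n
  proof -
    have nc: "n \<in> carrier G" using subgroup.mem_carrier[OF sNi n] .
    have "Nc j #> n \<in> carrier (H Mod Nc j)"
      unfolding carrier_FactGroup H_def r_coset_restrict using n by auto
    then obtain k :: int where k: "Nc j #> n = a [^]\<^bsub>H Mod Nc j\<^esub> k"
      using ga Q'.generate_pow[OF a] by auto
    have "a [^]\<^bsub>H Mod Nc j\<^esub> k = r_coset H (Nc j) (c [^]\<^bsub>H\<^esub> k)"
      unfolding ac using normal.FactGroup_int_pow[OF njH, of c k] c
      unfolding H_def r_coset_restrict by simp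
    also have "\<dots> = Nc j #> (c [^] k)"
      unfolding H_def r_coset_restrict using int_pow_consistent[OF sNi c] by simp
    finally have "Nc j #> n = Nc j #> (c [^] k)" using k by simp
    then have "n \<otimes> inv (c [^] k) \<in> Nc j" using rcos_eq_iff[OF nj nc int_pow_closed[OF cc]] by blast
    then show ?thesis using NjM by blast
  qed
  define N where "N = Nc i <#> M"
  have nN: "N \<lhd> G" unfolding N_def using normal_subgroup_set_mult_closed[OF ni M] .
  have NiN: "Nc i \<subseteq> N"
  proof
    fix n assume n: "n \<in> Nc i"
    have "n = n \<otimes> \<one>" using subgroup.mem_carrier[OF sNi n] by simp
    then show "n \<in> N" unfolding N_def set_mult_def using n subgroup.one_closed[OF sM] by blast
  qed
  have MN: "M \<subseteq> N"
  proof
    fix m assume m: "m \<in> M"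
    have "m = \<one> \<otimes> m" using subgroup.mem_carrier[OF sM m] by simp
    then show "m \<in> N" unfolding N_def set_mult_def using m subgroup.one_closed[OF sNi] by blast
  qed
  have cycN: "\<forall>y\<in>N. \<exists>k::int. y \<otimes> inv (c [^] k) \<in> M"
  proof
    fix y assume "y \<in> N"
    then obtain n m where n: "n \<in> Nc i" and m: "m \<in> M" and y: "y = n \<otimes> m"
      unfolding N_def set_mult_def by blast
    obtain k :: int where k: "n \<otimes> inv (c [^] k) \<in> M" using cycNi[OF n] by blast
    have nc: "n \<in> carrier G" using subgroup.mem_carrier[OF sNi n] .
    have mc: "m \<in> carrier G" using subgroup.mem_carrier[OF sM m] .
    define w where "w = c [^] k"
    have wc: "w \<in> carrier G" unfolding w_def using cc by simp
    have e: "n \<otimes> m \<otimes> inv w = (n \<otimes> inv w) \<otimes> (w \<otimes> m \<otimes> inv w)"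
      using nc mc wc by (simp add: m_assoc)
    have "w \<otimes> m \<otimes> inv w \<in> M" using normal.inv_op_closed2[OF M wc m] .
    then have "n \<otimes> m \<otimes> inv w \<in> M" using e k subgroup.m_closed[OF sM] unfolding w_def by metis
    then show "\<exists>k::int. y \<otimes> inv (c [^] k) \<in> M" using y unfolding w_def by blast
  qed
  show ?thesis
    using nN MN NiN Pi c cycN by blast
qed

end



context group begin

lemma derived_anti:
  assumes "m \<le> n" shows "(derived G ^^ n) (carrier G) \<subseteq> (derived G ^^ m) (carrier G)"
  using assms
proof (induction n)
  case 0 then show ?case by simp
next
  case (Suc n)
  have s: "subgroup ((derived G ^^ n) (carrier G)) G"
    using exp_of_derived_is_subgroup[OF subgroup_self] .
  have "(derived G ^^ Suc n) (carrier G) \<subseteq> (derived G ^^ n) (carrier G)"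
    using derived_incl[OF subset_refl s] by simp
  then show ?case using Suc by (cases "m = Suc n") auto
qed

lemma cj_inv: "g \<in> carrier G \<Longrightarrow> x \<in> carrier G \<Longrightarrow> cj G g (inv x) = inv (cj G g x)"
  using cj_hom[of g] is_group
  by (simp add: group_hom.hom_inv group_hom_axioms_def group_hom_def)

end

context cls begin

lemma main:
  assumes ss: "supersolvable G"
  shows "M \<lhd> G \<Longrightarrow> (derived G ^^ (2 * eta M - 1)) (carrier G) \<subseteq> D M"
proof (induction "card (carrier G) - card M" arbitrary: M rule: less_induct)
  case less
  have M: "M \<lhd> G" using less.prems .
  have sM: "subgroup M G" using M normal_imp_subgroup by blast
  show ?case
  proof (cases "M = carrier G")
    case True
    have "D M = carrier G" unfolding D_def Stab_def True using A_carrier by auto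
    then show ?thesis using exp_of_derived_in_carrier[OF subset_refl] by simp
  next
    case False
    obtain N z where N: "N \<lhd> G" and MN: "M \<subseteq> N" and MneN: "M \<noteq> N" and z: "z \<in> N"
      and cyc: "\<forall>n\<in>N. \<exists>k::int. n \<otimes> inv (z [^] k) \<in> M"
      using SS[OF ss M False] by blast
    have sN: "subgroup N G" using N normal_imp_subgroup by blast
    have NG: "N \<subseteq> carrier G" using subgroup.subset[OF sN] .
    have finN: "finite N" using finite_subset[OF NG fin] .
    have "card M < card N" using psubset_card_mono[OF finN] MN MneN by blast
    moreover have "card N \<le> card (carrier G)" using card_mono[OF fin NG] .
    ultimately have lt: "card (carrier G) - card N < card (carrier G) - card M" by simp
    have IH: "(derived G ^^ (2 * eta N - 1)) (carrier G) \<subseteq> D N"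
      using less.hyps[OF lt N] .
    have le: "eta N \<le> eta M" using eta_le[OF M N MN] .
    have pos: "1 \<le> eta N" using eta_pos[OF N] .
    show ?thesis
    proof (cases "eta N < eta M")
      case True
      have k: "Suc (Suc (2 * eta N - 1)) \<le> 2 * eta M - 1" using True pos by simp
      have "(derived G ^^ (2 * eta M - 1)) (carrier G) \<subseteq> (derived G ^^ Suc (Suc (2 * eta N - 1))) (carrier G)"
        using derived_anti[OF k] .
      also have "\<dots> = derived G (derived G ((derived G ^^ (2 * eta N - 1)) (carrier G)))" by simp
      also have "\<dots> \<subseteq> derived G (derived G (D N))" using mono_derived[OF mono_derived[OF IH]] .
      also have "\<dots> \<subseteq> D M" using MB[OF M N MN z cyc] .
      finally show ?thesis .
    next
      case False
      then have eq: "eta N = eta M" using le by simp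
      have "D N \<subseteq> D M"
      proof
        fix g assume g: "g \<in> D N"
        have gc: "g \<in> carrier G" and gN: "\<forall>x\<in>A. cj G g x \<otimes> inv x \<in> N" using g unfolding D_def Stab_def by auto
        have "\<forall>x\<in>A. cj G g x \<otimes> inv x \<in> M"
        proof
          fix x assume x: "x \<in> A"
          show "cj G g x \<otimes> inv x \<in> M"
          proof (rule ccontr)
            assume nM: "cj G g x \<otimes> inv x \<notin> M"
            have "eta N < eta M" using eta_lt[OF M N MN cjX[OF gc x] bspec[OF gN x] nM] .
            then show False using eq by simp
          qed
        qed
        then show "g \<in> D M" unfolding D_def Stab_def using gc by auto
      qed
      then show ?thesis using IH eq by simp
    qed
  qed
qed

lemma XX_inv: "g \<in> carrier G \<Longrightarrow> x \<in> XX \<Longrightarrow> cj G g x \<in> XX"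
proof -
  assume g: "g \<in> carrier G" and x: "x \<in> XX"
  then obtain a b where ab: "a \<in> A" "b \<in> A" "x = a \<otimes> inv b" unfolding XX_def set_mult_inv_def by auto
  have ac: "a \<in> carrier G" and bc: "b \<in> carrier G" using ab A_carrier by auto
  have "cj G g x = cj G g a \<otimes> inv (cj G g b)" using ab ac bc g by (simp add: cj_m cj_inv)
  then show ?thesis unfolding XX_def set_mult_inv_def using cj_A[OF g ab(1)] cj_A[OF g ab(2)] by blast
qed

lemma class_eq: "x \<in> XX \<Longrightarrow> R {\<one>} `` {x} = conj_class G x"
proof -
  assume x: "x \<in> XX"
  have xc: "x \<in> carrier G" using x XX_carrier by auto
  have "R {\<one>} `` {x} = {y \<in> XX. \<exists>g\<in>carrier G. cj G g x \<otimes> inv y = \<one>}"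
    unfolding R_def using x by auto
  also have "\<dots> = {cj G g x | g. g \<in> carrier G}"
  proof
    show "{y \<in> XX. \<exists>g\<in>carrier G. cj G g x \<otimes> inv y = \<one>} \<subseteq> {cj G g x | g. g \<in> carrier G}"
    proof
      fix y assume "y \<in> {y \<in> XX. \<exists>g\<in>carrier G. cj G g x \<otimes> inv y = \<one>}"
      then obtain g where y: "y \<in> XX" and g: "g \<in> carrier G" and e: "cj G g x \<otimes> inv y = \<one>" by auto
      have yc: "y \<in> carrier G" using y XX_carrier by auto
      have "cj G g x = y" using e g xc yc by (metis cj_closed inv_equality inv_inv inv_closed)
      then show "y \<in> {cj G g x | g. g \<in> carrier G}" using g by blast
    qed
    show "{cj G g x | g. g \<in> carrier G} \<subseteq> {y \<in> XX. \<exists>g\<in>carrier G. cj G g x \<otimes> inv y = \<one>}"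
    proof
      fix y assume "y \<in> {cj G g x | g. g \<in> carrier G}"
      then obtain g where g: "g \<in> carrier G" and y: "y = cj G g x" by blast
      have "cj G g x \<otimes> inv y = \<one>" using y g xc by simp
      then show "y \<in> {y \<in> XX. \<exists>g\<in>carrier G. cj G g x \<otimes> inv y = \<one>}" using XX_inv[OF g x] y g by blast
    qed
  qed
  also have "\<dots> = conj_class G x" unfolding conj_class_def cj_def by simp
  finally show ?thesis .
qed

lemma eta_one: "eta {\<one>} = num_classes G XX"
proof -
  have "{C \<in> conj_classes G. C \<subseteq> XX} = XX // R {\<one>}"
  proof
    show "{C \<in> conj_classes G. C \<subseteq> XX} \<subseteq> XX // R {\<one>}"
    proof
      fix C assume "C \<in> {C \<in> conj_classes G. C \<subseteq> XX}"
      then obtain b where b: "b \<in> carrier G" and C: "C = conj_class G b" and CX: "C \<subseteq> XX"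
        unfolding conj_classes_def by auto
      have "b = inv \<one> \<otimes> b \<otimes> \<one>" using b by simp
      then have "b \<in> C" unfolding C conj_class_def using one_closed by blast
      then have bX: "b \<in> XX" using CX by auto
      have "R {\<one>} `` {b} \<in> XX // R {\<one>}" using bX by (rule quotientI)
      then show "C \<in> XX // R {\<one>}" using class_eq[OF bX] C by simp
    qed
    show "XX // R {\<one>} \<subseteq> {C \<in> conj_classes G. C \<subseteq> XX}"
    proof
      fix C assume "C \<in> XX // R {\<one>}"
      then obtain x where x: "x \<in> XX" and C: "C = R {\<one>} `` {x}" unfolding quotient_def by blast
      have xc: "x \<in> carrier G" using x XX_carrier by auto
      have "C = conj_class G x" using class_eq[OF x] C by simp
      moreover have "C \<subseteq> XX" using C unfolding R_def by auto
      ultimately show "C \<in> {C \<in> conj_classes G. C \<subseteq> XX}" unfolding conj_classes_def using xc by auto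
    qed
  qed
  then show ?thesis unfolding eta_def num_classes_def by simp
qed

lemma D_one: "D {\<one>} = centralizer_set G A"
proof -
  have "cj G g x \<otimes> inv x \<in> {\<one>} \<longleftrightarrow> inv g \<otimes> x \<otimes> g = x" if "g \<in> carrier G" "x \<in> A" for g x
  proof -
    have xc: "x \<in> carrier G" using that A_carrier by auto
    show ?thesis using cj_eq_mult[OF that(1) xc one_closed] xc that(1) unfolding cj_def by auto
  qed
  then show ?thesis unfolding D_def Stab_def centralizer_set_def by auto
qed

lemma C_normal: "centralizer_set G A \<lhd> G"
proof -
  have sC: "subgroup (centralizer_set G A) G"
    using D_subgroup[OF one_is_normal] D_one by simp
  have C_iff: "g \<in> centralizer_set G A \<longleftrightarrow> g \<in> carrier G \<and> (\<forall>a\<in>A. cj G g a = a)" for g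
    unfolding centralizer_set_def cj_def by auto
  show ?thesis unfolding normal_inv_iff
  proof (intro conjI sC ballI)
    fix x h assume x: "x \<in> carrier G" and h: "h \<in> centralizer_set G A"
    have hc: "h \<in> carrier G" and hA: "\<forall>a\<in>A. cj G h a = a" using h C_iff by auto
    have "cj G (x \<otimes> h \<otimes> inv x) a = a" if a: "a \<in> A" for a
    proof -
      have ac: "a \<in> carrier G" using a A_carrier by auto
      have "cj G (x \<otimes> h \<otimes> inv x) a = cj G (inv x) (cj G h (cj G x a))"
        using x hc ac by (simp add: cj_mult)
      also have "\<dots> = cj G (inv x) (cj G x a)" using hA cj_A[OF x a] by simp
      also have "\<dots> = a" using cj_inv_cancel[OF x ac] .
      finally show ?thesis .
    qed
    then show "x \<otimes> h \<otimes> inv x \<in> centralizer_set G A" using C_iff x hc by simp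
  qed
qed

lemma final:
  assumes ss: "supersolvable G"
  shows "int (derived_length (G Mod (centralizer_set G A))) \<le> 2 * int (num_classes G XX) - 1"
proof -
  define C where "C = centralizer_set G A"
  define n where "n = 2 * eta {\<one>} - 1"
  have nC: "C \<lhd> G" unfolding C_def using C_normal .
  have sub: "(derived G ^^ n) (carrier G) \<subseteq> C"
    unfolding n_def C_def using main[OF ss one_is_normal] D_one by simp
  interpret Q: group "G Mod C" using Q_group[OF nC] .
  have gh: "group_hom G (G Mod C) (\<lambda>a. C #> a)"
    using Q_hom[OF nC] Q.is_group is_group by (simp add: group_hom_def group_hom_axioms_def)
  have img: "(derived (G Mod C) ^^ n) (carrier (G Mod C)) = (\<lambda>a. C #> a) ` ((derived G ^^ n) (carrier G))"
    using group_hom.exp_of_derived_img[OF gh subset_refl, of n] unfolding carrier_FactGroup by simp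
  have sD: "subgroup ((derived G ^^ n) (carrier G)) G" using exp_of_derived_is_subgroup[OF subgroup_self] .
  have sC: "subgroup C G" using nC normal_imp_subgroup by blast
  have "(\<lambda>a. C #> a) ` ((derived G ^^ n) (carrier G)) = {C}"
  proof -
    have "\<one> \<in> (derived G ^^ n) (carrier G)" using subgroup.one_closed[OF sD] .
    moreover have "C #> a = C" if "a \<in> (derived G ^^ n) (carrier G)" for a
      using coset_join2[OF subgroup.mem_carrier[OF sD that] sC] sub that by blast
    ultimately show ?thesis by blast
  qed
  then have "(derived (G Mod C) ^^ n) (carrier (G Mod C)) = {\<one>\<^bsub>G Mod C\<^esub>}" using img by simp
  then have "derived_length (G Mod C) \<le> n" unfolding derived_length_def by (rule Least_le)
  moreover have "1 \<le> eta {\<one>}" using eta_pos[OF one_is_normal] .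
  ultimately show ?thesis unfolding C_def n_def eta_one by linarith
qed

end

theorem theoremB:
  fixes G :: "('a, 'b) monoid_scheme" and A :: "'a set"
  assumes "group G" and "finite (carrier G)" and "supersolvable G"
    and "A \<in> conj_classes G"
  shows "int (derived_length (G Mod (centralizer_set G A)))
           \<le> 2 * int (num_classes G (set_mult_inv G A)) - 1"
proof -
  obtain a0 where a0: "a0 \<in> carrier G" and A: "A = conj_class G a0"
    using assms(4) unfolding conj_classes_def by auto
  interpret c: cls G A a0 using assms(1,2) a0 A by (simp add: cls_def cls_axioms_def)
  show ?thesis using c.final[OF assms(3)] unfolding c.XX_def .
qed


end
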